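(* For all $N\in\mathbb{N}$, $$\#\{(q_1,q_2)\in(\tfrac12\mathbb{Z})^2\mid 4q_1^2+4q_2^2+q_1-q_2=N\}=\frac14\,\#\{(x,y)\in\mathbb{Z}^2\mid x^2+y^2=8N+1\}.$$
   Context: In type $C_2^{(1)}$, with coweight lattice $L=\{\sqrt2q_1\varepsilon_1+\sqrt2q_2\varepsilon_2\mid q_1,q_2\in\frac12\mathbb{Z}\}$, the quantity $4q_1^2+4q_2^2+q_1-q_2$ is the $\Lambda_1$-atomic length $\mathcal{L}_{\Lambda_1}(t_q)=\langle\Lambda_1-t_q\Lambda_1,\rho^\vee\rangle$ of $q=\sqrt2q_1\varepsilon_1+\sqrt2q_2\varepsilon_2$; so the left-hand side is $|\widehat{\mathcal{B}_1}(N)|$, the number of $q\in L$ with $\mathcal{L}_{\Lambda_1}(t_q)=N$. *)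

theory Defs
  imports Complex_Main
begin

definition half_ints :: "rat set" where
  "half_ints = {q. 2 * q \<in> \<int>}"

end

theory Submission
  imports Defs
begin

lemma odd_sq_mod8: "odd (y::int) \<Longrightarrow> y^2 mod 8 = 1"
proof -
  assume "odd y"
  then obtain m where m: "y = 2*m+1" by (meson oddE)
  have "even (m*(m+1))" by simp
  then obtain t where "m*(m+1) = 2*t" by blast
  then have "y^2 = 8*t + 1" unfolding m by (simp add: power2_eq_square algebra_simps)
  then show ?thesis by simp
qed

lemma abs_le_sq: "\<bar>x::int\<bar> \<le> x^2"
proof (cases "x = 0")
  case False
  then have "\<bar>x\<bar> * 1 \<le> \<bar>x\<bar> * \<bar>x\<bar>" by (intro mult_left_mono) auto
  then show ?thesis by (simp add: power2_eq_square abs_mult[symmetric])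
qed simp

definition SS :: "nat \<Rightarrow> (int \<times> int) set" where
  "SS N = {(x, y). x^2 + y^2 = 8 * int N + 1}"
definition TT :: "nat \<Rightarrow> (int \<times> int) set" where
  "TT N = {(x, y). x^2 + y^2 = 8 * int N + 1 \<and> y mod 4 = 1}"
definition AA :: "nat \<Rightarrow> (int \<times> int) set" where
  "AA N = {(a, b). 2*a^2 + 2*b^2 + a - b = 2 * int N}"

lemma SS_finite: "finite (SS N)"
proof -
  let ?M = "8 * int N + 1"
  have "SS N \<subseteq> {-?M..?M} \<times> {-?M..?M}"
  proof
    fix p assume "p \<in> SS N"
    then obtain x y where p: "p = (x,y)" "x^2 + y^2 = ?M" by (auto simp: SS_def)
    have "\<bar>x\<bar> \<le> x^2" "\<bar>y\<bar> \<le> y^2" by (simp_all add: abs_le_sq)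
    moreover have "x^2 \<ge> 0" "y^2 \<ge> 0" by simp_all
    ultimately show "p \<in> {-?M..?M} \<times> {-?M..?M}" using p by auto
  qed
  then show ?thesis by (rule finite_subset) simp
qed

lemma card_T: "card (SS N) = 4 * card (TT N)"
proof -
  define Sy where "Sy = {p \<in> SS N. odd (snd p)}"
  define Sx where "Sx = {p \<in> SS N. odd (fst p)}"
  define rot :: "int \<times> int \<Rightarrow> int \<times> int" where "rot = (\<lambda>(x,y). (-y, x))"
  define ng :: "int \<times> int \<Rightarrow> int \<times> int" where "ng = (\<lambda>(x,y). (-x, -y))"
  have fin: "finite (SS N)" by (rule SS_finite)
  have par: "odd x \<noteq> odd y" if "(x,y) \<in> SS N" for x y
  proof -
    have "odd (x^2 + y^2)" using that by (simp add: SS_def)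
    then show ?thesis by auto
  qed
  have split1: "SS N = Sy \<union> Sx" using par by (auto simp: Sy_def Sx_def)
  have disj1: "Sy \<inter> Sx = {}" using par by (auto simp: Sy_def Sx_def)
  have injr: "inj rot" by (auto simp: rot_def inj_def)
  have injn: "inj ng" by (auto simp: ng_def inj_def)
  have "Sx = rot ` Sy"
  proof
    show "rot ` Sy \<subseteq> Sx" by (auto simp: rot_def Sy_def Sx_def SS_def)
    show "Sx \<subseteq> rot ` Sy"
    proof
      fix p assume "p \<in> Sx"
      then obtain x y where p: "p = (x,y)" "(x,y) \<in> Sx" by (cases p) auto
      then have "(y, -x) \<in> Sy" by (auto simp: Sy_def Sx_def SS_def)
      moreover have "p = rot (y, -x)" using p by (simp add: rot_def)
      ultimately show "p \<in> rot ` Sy" by blast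
    qed
  qed
  then have cx: "card Sx = card Sy" by (simp add: card_image inj_on_subset[OF injr])
  have finy: "finite Sy" using fin by (simp add: Sy_def)
  have finx: "finite Sx" using fin by (simp add: Sx_def)
  have c1: "card (SS N) = 2 * card Sy"
    using card_Un_disjoint[OF finy finx disj1] split1 cx by simp
  have TS: "TT N \<subseteq> Sy" by (auto simp: TT_def Sy_def SS_def) presburger
  have split2: "Sy = TT N \<union> ng ` TT N"
  proof
    show "TT N \<union> ng ` TT N \<subseteq> Sy" using TS by (auto simp: ng_def Sy_def SS_def TT_def)
    show "Sy \<subseteq> TT N \<union> ng ` TT N"
    proof
      fix p assume "p \<in> Sy"
      then obtain x y where p: "p = (x,y)" "(x,y) \<in> Sy" by (cases p) auto
      then have o: "odd y" and e: "x^2 + y^2 = 8 * int N + 1" by (auto simp: Sy_def SS_def)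
      have "y mod 4 = 1 \<or> y mod 4 = 3" using o by presburger
      then show "p \<in> TT N \<union> ng ` TT N"
      proof
        assume "y mod 4 = 1" then show ?thesis using p e by (auto simp: TT_def)
      next
        assume "y mod 4 = 3"
        then have "(-x, -y) \<in> TT N" using e by (auto simp: TT_def) presburger
        moreover have "p = ng (-x,-y)" using p by (simp add: ng_def)
        ultimately show ?thesis by blast
      qed
    qed
  qed
  have disj2: "TT N \<inter> ng ` TT N = {}"
    by (auto simp: TT_def ng_def) presburger
  have finT: "finite (TT N)" using finy TS finite_subset by blast
  have "card Sy = 2 * card (TT N)"
    using card_Un_disjoint[OF finT finite_imageI[OF finT] disj2] split2
      card_image[OF inj_on_subset[OF injn]] by simp
  with c1 show ?thesis by simp
qed

lemma card_A: "card (AA N) = card (TT N)"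
proof -
  define phi :: "int \<times> int \<Rightarrow> int \<times> int" where "phi = (\<lambda>(a,b). (2*(a+b), 2*(a-b)+1))"
  have inj: "inj phi" by (auto simp: phi_def inj_def)
  have "TT N = phi ` AA N"
  proof
    show "phi ` AA N \<subseteq> TT N"
    proof
      fix p assume "p \<in> phi ` AA N"
      then obtain a b where p: "p = phi (a,b)" and e: "2*a^2 + 2*b^2 + a - b = 2 * int N"
        by (auto simp: AA_def)
      have "(2*(a+b))^2 + (2*(a-b)+1)^2 = 4*(2*a^2 + 2*b^2 + a - b) + 1"
        by (simp add: power2_eq_square algebra_simps)
      then show "p \<in> TT N" using p e by (simp add: phi_def TT_def) presburger
    qed
    show "TT N \<subseteq> phi ` AA N"
    proof
      fix p assume "p \<in> TT N"
      then obtain x y where p: "p = (x,y)" and e: "x^2 + y^2 = 8 * int N + 1" and m: "y mod 4 = 1"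
        by (auto simp: TT_def)
      obtain j where j: "y = 4*j+1" using m by (metis mult.commute div_mult_mod_eq add.commute)
      have "odd y" using j by simp
      then have "y^2 mod 8 = 1" by (rule odd_sq_mod8)
      moreover have "\<And>X Y::int. Y mod 8 = 1 \<Longrightarrow> X + Y = 8 * int N + 1 \<Longrightarrow> X mod 2 = 0"
        by presburger
      ultimately have "x^2 mod 2 = 0" using e by blast
      then have "even x" by (simp add: even_iff_mod_2_eq_zero[symmetric])
      then obtain k where k: "x = 2*k" by (auto elim: evenE)
      have e2: "k^2 + 4*j^2 + 2*j = 2 * int N"
        using e unfolding k j by (simp add: power2_eq_square algebra_simps)
      then have "k^2 = 2*(int N - 2*j^2 - j)" by (simp add: algebra_simps)
      then have "even (k^2)" by (metis dvd_triv_left)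
      then have "even k" by simp
      then obtain l where l: "k = 2*l" by (auto elim: evenE)
      have "(l+j, l-j) \<in> AA N" using e2 unfolding l AA_def
        by (simp add: power2_eq_square algebra_simps)
      moreover have "p = phi (l+j, l-j)" using p k l j by (simp add: phi_def)
      ultimately show "p \<in> phi ` AA N" by blast
    qed
  qed
  then show ?thesis by (simp add: card_image inj_on_subset[OF inj])
qed

lemma card_Q: "card {(q1, q2). (q1::rat) \<in> half_ints \<and> (q2::rat) \<in> half_ints \<and>
              4 * q1^2 + 4 * q2^2 + q1 - q2 = of_nat N} = card (AA N)"
proof -
  define h :: "int \<times> int \<Rightarrow> rat \<times> rat" where "h = (\<lambda>(a,b). (of_int a / 2, of_int b / 2))"
  have inj: "inj h" by (auto simp: h_def inj_def)
  have key: "(4 * (of_int a / 2)^2 + 4 * (of_int b/2)^2 + of_int a / 2 - of_int b / 2 = (of_nat N :: rat))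
      \<longleftrightarrow> 2*a^2 + 2*b^2 + a - b = 2 * int N" for a b :: int
  proof -
    have eq: "4 * (of_int a / 2)^2 + 4 * (of_int b/2)^2 + of_int a / 2 - of_int b / 2
       = (of_int (2*a^2 + 2*b^2 + a - b) :: rat) / 2"
      by (simp add: power2_eq_square field_simps)
    have "(4 * (of_int a / 2)^2 + 4 * (of_int b/2)^2 + of_int a / 2 - of_int b / 2 = (of_nat N :: rat))
       \<longleftrightarrow> (of_int (2*a^2 + 2*b^2 + a - b) :: rat) = of_int (2 * int N)"
      unfolding eq by (simp add: divide_eq_eq mult.commute)
    also have "\<dots> \<longleftrightarrow> 2*a^2 + 2*b^2 + a - b = 2 * int N" by (rule of_int_eq_iff)
    finally show ?thesis .
  qed
  have "{(q1, q2). (q1::rat) \<in> half_ints \<and> (q2::rat) \<in> half_ints \<and>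
              4 * q1^2 + 4 * q2^2 + q1 - q2 = of_nat N} = h ` AA N"
  proof
    show "h ` AA N \<subseteq> {(q1, q2). (q1::rat) \<in> half_ints \<and> (q2::rat) \<in> half_ints \<and>
              4 * q1^2 + 4 * q2^2 + q1 - q2 = of_nat N}"
      using key by (auto simp: h_def AA_def half_ints_def)
    show "{(q1, q2). (q1::rat) \<in> half_ints \<and> (q2::rat) \<in> half_ints \<and>
              4 * q1^2 + 4 * q2^2 + q1 - q2 = of_nat N} \<subseteq> h ` AA N"
    proof
      fix p assume "p \<in> {(q1, q2). (q1::rat) \<in> half_ints \<and> (q2::rat) \<in> half_ints \<and>
              4 * q1^2 + 4 * q2^2 + q1 - q2 = of_nat N}"
      then obtain q1 q2 where p: "p = (q1,q2)" and h1: "2*q1 \<in> \<int>" and h2: "2*q2 \<in> \<int>"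
        and e: "4 * q1^2 + 4 * q2^2 + q1 - q2 = of_nat N"
        by (auto simp: half_ints_def)
      obtain a where a: "2*q1 = of_int a" using h1 by (auto elim: Ints_cases)
      obtain b where b: "2*q2 = of_int b" using h2 by (auto elim: Ints_cases)
      have q1: "q1 = of_int a / 2" and q2: "q2 = of_int b / 2" using a b by simp_all
      have "(a,b) \<in> AA N" using e key[of a b] unfolding q1 q2 AA_def by simp
      moreover have "p = h (a,b)" using p q1 q2 by (simp add: h_def)
      ultimately show "p \<in> h ` AA N" by blast
    qed
  qed
  then show ?thesis by (simp add: card_image inj_on_subset[OF inj])
qed

theorem corollary8p13:
  fixes N :: nat
  shows "4 * card {(q1, q2). (q1::rat) \<in> half_ints \<and> (q2::rat) \<in> half_ints \<and>
              4 * q1^2 + 4 * q2^2 + q1 - q2 = of_nat N}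
         = card {(x, y). (x::int)^2 + (y::int)^2 = 8 * int N + 1}"
  using card_Q[of N] card_A[of N] card_T[of N] by (simp add: SS_def)

end
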